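(* If $m\ge 2$ and $k\ge 3$, the Spencer operator $\mathcal S^1\colon\operatorname{Hom}(V,\mathfrak a)\to\operatorname{Hom}(\wedge^2V,V)$ is injective.
   Context: $\mathfrak a=\mathfrak{sl}(2,\mathbb R)\times\mathfrak{gl}(m,\mathbb R)$ acting faithfully on $V=V_k\otimes W$, where $V_k=S^k(\mathbb R^2)$ is the irreducible $(k+1)$-dimensional $\mathfrak{sl}(2,\mathbb R)$-module and $W=\mathbb R^m$ the standard $\mathfrak{gl}(m,\mathbb R)$-module. $\mathcal S^1(\phi)(v_1\wedge v_2)=-\phi(v_2)v_1+\phi(v_1)v_2$. *)

theory Defs
  imports Complex_Main "HOL-Library.FuncSet"
begin

text \<open>V_k = S^k(R^2) has basis b_i = x^(k-i) y^i (i = 0..k), W = R^m has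
basis w_j (j = 0..m-1); V = V_k \<otimes> W has basis b_i \<otimes> w_j.  A vector of V is
a coefficient array v i j, zero outside i \<le> k, j < m.  Matrices are arrays A r s
(row r, column s), zero outside the relevant index range.\<close>

type_synonym vecV = "nat \<Rightarrow> nat \<Rightarrow> real"
type_synonym mat = "nat \<Rightarrow> nat \<Rightarrow> real"
type_synonym aelem = "mat \<times> mat"

definition Vsp :: "nat \<Rightarrow> nat \<Rightarrow> vecV set" where
  "Vsp k m = {v. \<forall>i j. (k < i \<or> m \<le> j) \<longrightarrow> v i j = 0}"

definition sl2 :: "mat set" where
  "sl2 = {A. (\<forall>r s. (1 < r \<or> 1 < s) \<longrightarrow> A r s = 0) \<and> A 0 0 + A 1 1 = 0}"

definition glm :: "nat \<Rightarrow> mat set" where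
  "glm m = {B. \<forall>r s. (m \<le> r \<or> m \<le> s) \<longrightarrow> B r s = 0}"

definition alg :: "nat \<Rightarrow> aelem set" where
  "alg m = sl2 \<times> glm m"

text \<open>A 2x2 matrix acts on R^2 = span(x,y) by A x = A00 x + A10 y, A y = A01 x + A11 y,
and on S^k(R^2) as a derivation:
A b_i' = ((k-i') A00 + i' A11) b_i' + (k-i') A10 b_(i'+1) + i' A01 b_(i'-1).
sk_coeff k A i i' is the coefficient of b_i in A b_i'.\<close>
definition sk_coeff :: "nat \<Rightarrow> mat \<Rightarrow> nat \<Rightarrow> nat \<Rightarrow> real" where
  "sk_coeff k A i i' =
     (if i = i' then real (k - i') * A 0 0 + real i' * A 1 1
      else if i = Suc i' then real (k - i') * A 1 0
      else if Suc i = i' then real i' * A 0 1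
      else 0)"

text \<open>Action of a = sl(2) x gl(m) on V = V_k \<otimes> W:
(A,B)(p \<otimes> w) = (A p) \<otimes> w + p \<otimes> (B w).\<close>
definition act :: "nat \<Rightarrow> nat \<Rightarrow> aelem \<Rightarrow> vecV \<Rightarrow> vecV" where
  "act k m a v = (\<lambda>i j. if i \<le> k \<and> j < m then
       (\<Sum>i'\<le>k. sk_coeff k (fst a) i i' * v i' j) + (\<Sum>j'<m. snd a j j' * v i j')
     else 0)"

text \<open>Hom(V, a): a linear map \<phi> is given by its values \<Phi> i j = \<phi>(b_i \<otimes> w_j) \<in> a
on the basis (zero outside the index range, for uniqueness).\<close>
definition Hom :: "nat \<Rightarrow> nat \<Rightarrow> (nat \<Rightarrow> nat \<Rightarrow> aelem) set" where
  "Hom k m = {\<Phi>. (\<forall>i j. i \<le> k \<and> j < m \<longrightarrow> \<Phi> i j \<in> alg m) \<and>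
                  (\<forall>i j. (k < i \<or> m \<le> j) \<longrightarrow> \<Phi> i j = (\<lambda>_ _. 0, \<lambda>_ _. 0))}"

definition hom_apply :: "nat \<Rightarrow> nat \<Rightarrow> (nat \<Rightarrow> nat \<Rightarrow> aelem) \<Rightarrow> vecV \<Rightarrow> aelem" where
  "hom_apply k m \<Phi> v =
     ((\<lambda>r s. \<Sum>i\<le>k. \<Sum>j<m. v i j * fst (\<Phi> i j) r s),
      (\<lambda>r s. \<Sum>i\<le>k. \<Sum>j<m. v i j * snd (\<Phi> i j) r s))"

text \<open>Spencer operator: S^1(\<phi>)(v1 \<and> v2) = - \<phi>(v2) v1 + \<phi>(v1) v2.  An element of
Hom(\<and>^2 V, V) is identified with the alternating bilinear map V x V \<rightarrow> V it induces.\<close>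
definition spencer1 :: "nat \<Rightarrow> nat \<Rightarrow> (nat \<Rightarrow> nat \<Rightarrow> aelem) \<Rightarrow> vecV \<Rightarrow> vecV \<Rightarrow> vecV" where
  "spencer1 k m \<Phi> v1 v2 =
     (\<lambda>i j. - act k m (hom_apply k m \<Phi> v2) v1 i j + act k m (hom_apply k m \<Phi> v1) v2 i j)"

end

theory Submission
  imports Defs
begin

lemma sk_zero:
  assumes "A 0 0 = 0" "A 1 1 = 0" "A 1 0 = 0" "A 0 1 = 0"
  shows "sk_coeff k A a b = 0"
  using assms by (simp add: sk_coeff_def)

lemma key:
  fixes dA dB :: "nat \<Rightarrow> nat \<Rightarrow> mat" and k m :: nat
  assumes m2: "2 \<le> m" and k3: "3 \<le> k"
  and eq: "\<And>i j i' j' a b. i\<le>k \<Longrightarrow> j<m \<Longrightarrow> i'\<le>k \<Longrightarrow> j'<m \<Longrightarrow> a\<le>k \<Longrightarrow> b<m \<Longrightarrow>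
     (if b=j' then sk_coeff k (dA i j) a i' else 0) + (if a=i' then dB i j b j' else 0)
   = (if b=j then sk_coeff k (dA i' j') a i else 0) + (if a=i then dB i' j' b j else 0)"
  and tr: "\<And>i j. i\<le>k \<Longrightarrow> j<m \<Longrightarrow> dA i j 0 0 + dA i j 1 1 = 0"
  shows "\<And>i j. i\<le>k \<Longrightarrow> j<m \<Longrightarrow> dA i j 0 0 = 0 \<and> dA i j 1 1 = 0 \<and> dA i j 1 0 = 0 \<and> dA i j 0 1 = 0"
    and "\<And>i j b c. i\<le>k \<Longrightarrow> j<m \<Longrightarrow> b<m \<Longrightarrow> c<m \<Longrightarrow> dB i j b c = 0"
proof -
  show A0: "dA i j 0 0 = 0 \<and> dA i j 1 1 = 0 \<and> dA i j 1 0 = 0 \<and> dA i j 0 1 = 0"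
    if ij: "i\<le>k" "j<m" for i j
  proof -
    define j' where "j' = (if j = 0 then 1 else (0::nat))"
    have j': "j' < m" "j' \<noteq> j" using m2 by (auto simp: j'_def)
    define A where "A = dA i j"
    define c where "c = dB i j j' j'"
    have H: "sk_coeff k A a i' + (if a = i' then c else 0) = 0"
      if "a\<le>k" "i'\<le>k" "a\<noteq>i" "i'\<noteq>i" for a i'
      using eq[OF ij \<open>i'\<le>k\<close> j'(1) \<open>a\<le>k\<close> j'(1)] j'(2) that
      by (auto simp: A_def c_def split: if_splits)
    have D: "real (k-p) * A 0 0 + real p * A 1 1 + c = 0" if "p\<le>k" "p\<noteq>i" for p
      using H[of p p] that by (simp add: sk_coeff_def)
    have L: "A 1 0 = 0"
    proof -
      define p where "p = (if i = 0 then 1 else if i = 1 then 2 else (0::nat))"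
      have p: "p < k" "p \<noteq> i" "Suc p \<noteq> i" using k3 by (auto simp: p_def)
      have "real (k-p) * A 1 0 = 0" using H[of "Suc p" p] p by (simp add: sk_coeff_def)
      thus ?thesis using p by simp
    qed
    have U: "A 0 1 = 0"
    proof -
      define p where "p = (if i = 0 then 2 else if i = 1 then 3 else (1::nat))"
      have p: "p \<le> k" "p \<noteq> i" "p - 1 \<noteq> i" "p \<ge> 1" using k3 by (auto simp: p_def)
      have e1: "p - 1 \<noteq> p" "p - 1 \<noteq> Suc p" "Suc (p - 1) = p" using p by auto
      have "real p * A 0 1 = 0" using H[of "p - 1" p] p e1 by (simp only: sk_coeff_def if_False if_True) simp
      thus ?thesis using p by simp
    qed
    have T: "A 0 0 + A 1 1 = 0" using tr[OF ij] by (simp add: A_def)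
    obtain p q where pq: "p \<le> k" "q \<le> k" "p \<noteq> i" "q \<noteq> i" "p \<noteq> q"
    proof (cases "i = 0")
      case True thus ?thesis using that[of 1 2] k3 by auto
    next
      case False
      show ?thesis
      proof (cases "i = 1")
        case True thus ?thesis using that[of 0 2] k3 by auto
      next
        case False thus ?thesis using that[of 0 1] k3 \<open>i \<noteq> 0\<close> by auto
      qed
    qed
    have d1: "(real k - real p) * A 0 0 + real p * A 1 1 + c = 0" using D[OF pq(1,3)] pq by (simp add: of_nat_diff)
    have d2: "(real k - real q) * A 0 0 + real q * A 1 1 + c = 0" using D[OF pq(2,4)] pq by (simp add: of_nat_diff)
    have T': "A 1 1 = - A 0 0" using T by simp
    have d1': "real k * A 0 0 - 2 * (real p * A 0 0) + c = 0" using d1 unfolding T' by (simp add: algebra_simps)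
    have d2': "real k * A 0 0 - 2 * (real q * A 0 0) + c = 0" using d2 unfolding T' by (simp add: algebra_simps)
    have "(real q - real p) * (2 * A 0 0) = 0" using d1' d2' by (simp add: algebra_simps) auto
    hence "A 0 0 = 0" using pq(5) by simp
    with T L U show ?thesis by (simp add: A_def)
  qed
  show "dB i j b c = 0" if "i\<le>k" "j<m" "b<m" "c<m" for i j b c
  proof -
    define p where "p = (if i = 0 then 1 else (0::nat))"
    have p: "p \<le> k" "p \<noteq> i" using k3 by (auto simp: p_def)
    have z1: "sk_coeff k (dA i j) a b' = 0" for a b' using A0[OF that(1,2)] by (intro sk_zero) auto
    have z2: "sk_coeff k (dA p c) a b' = 0" for a b' using A0[OF p(1) that(4)] by (intro sk_zero) auto
    show ?thesis using eq[OF that(1,2) p(1) that(4) p(1) that(3)] p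
      unfolding z1 z2 by (simp split: if_splits)
  qed
qed

definition ev :: "nat \<Rightarrow> nat \<Rightarrow> vecV" where
  "ev i j = (\<lambda>a b. if a = i \<and> b = j then 1 else 0)"

lemma ev_Vsp: "i \<le> k \<Longrightarrow> j < m \<Longrightarrow> ev i j \<in> Vsp k m"
  by (auto simp: ev_def Vsp_def)

lemma if01_mult: "(if P then 1 else 0) * (x::real) = (if P then x else 0)" by simp

lemma sum2_delta:
  fixes f :: "nat \<Rightarrow> nat \<Rightarrow> real"
  assumes "i \<le> k" "j < m"
  shows "(\<Sum>i'\<le>k. \<Sum>j'<m. ev i j i' j' * f i' j') = f i j"
proof -
  have "(\<Sum>i'\<le>k. \<Sum>j'<m. ev i j i' j' * f i' j') = (\<Sum>i'\<le>k. if i' = i then (\<Sum>j'<m. if j' = j then f i' j' else 0) else 0)"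
    by (rule sum.cong) (auto simp: ev_def if01_mult)
  also have "\<dots> = f i j" using assms by (simp add: sum.delta' if01_mult)
  finally show ?thesis .
qed

lemma hom_apply_ev:
  assumes "i \<le> k" "j < m"
  shows "hom_apply k m \<Phi> (ev i j) = \<Phi> i j"
  unfolding hom_apply_def using sum2_delta[OF assms]
  by (simp add: prod_eq_iff)

lemma act_ev:
  assumes "i' \<le> k" "j' < m"
  shows "act k m x (ev i' j') a b = (if a \<le> k \<and> b < m then
     (if b = j' then sk_coeff k (fst x) a i' else 0) + (if a = i' then snd x b j' else 0) else 0)"
proof -
  have 1: "(\<Sum>i''\<le>k. sk_coeff k (fst x) a i'' * ev i' j' i'' b) = (if b = j' then sk_coeff k (fst x) a i' else 0)"
    using assms by (simp add: ev_def if_distrib sum.delta' cong: if_cong)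
  have 2: "(\<Sum>j''<m. snd x b j'' * ev i' j' a j'') = (if a = i' then snd x b j' else 0)"
    using assms by (simp add: ev_def if_distrib sum.delta' cong: if_cong)
  show ?thesis unfolding act_def using 1 2 by simp
qed

lemma sk_diff: "sk_coeff k (\<lambda>r s. A r s - B r s) a b = sk_coeff k A a b - sk_coeff k B a b"
  by (simp add: sk_coeff_def algebra_simps)

theorem lemma3:
  fixes k m :: nat
  assumes "2 \<le> m" and "3 \<le> k"
  shows "inj_on (\<lambda>\<Phi>. restrict (\<lambda>p. spencer1 k m \<Phi> (fst p) (snd p)) (Vsp k m \<times> Vsp k m))
                (Hom k m)"
proof (rule inj_onI)
  fix \<Phi> \<Psi> assume P: "\<Phi> \<in> Hom k m" and Q: "\<Psi> \<in> Hom k m"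
    and R: "restrict (\<lambda>p. spencer1 k m \<Phi> (fst p) (snd p)) (Vsp k m \<times> Vsp k m) =
            restrict (\<lambda>p. spencer1 k m \<Psi> (fst p) (snd p)) (Vsp k m \<times> Vsp k m)"
  have S: "spencer1 k m \<Phi> v1 v2 = spencer1 k m \<Psi> v1 v2" if "v1 \<in> Vsp k m" "v2 \<in> Vsp k m" for v1 v2
    using fun_cong[OF R, of "(v1, v2)"] that by simp
  define dA where "dA i j = (\<lambda>r s. fst (\<Phi> i j) r s - fst (\<Psi> i j) r s)" for i j
  define dB where "dB i j = (\<lambda>r s. snd (\<Phi> i j) r s - snd (\<Psi> i j) r s)" for i j
  have eq: "(if b=j' then sk_coeff k (dA i j) a i' else 0) + (if a=i' then dB i j b j' else 0)
   = (if b=j then sk_coeff k (dA i' j') a i else 0) + (if a=i then dB i' j' b j else 0)"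
    if h: "i\<le>k" "j<m" "i'\<le>k" "j'<m" "a\<le>k" "b<m" for i j i' j' a b
  proof -
    have "spencer1 k m \<Phi> (ev i j) (ev i' j') a b = spencer1 k m \<Psi> (ev i j) (ev i' j') a b"
      using S[OF ev_Vsp ev_Vsp] h by simp
    then show ?thesis
      unfolding spencer1_def hom_apply_ev[OF h(1,2)] hom_apply_ev[OF h(3,4)]
        act_ev[OF h(1,2)] act_ev[OF h(3,4)] dA_def dB_def sk_diff
      using h by (simp split: if_splits; linarith)
  qed
  have PA: "\<Phi> i j \<in> alg m" "\<Psi> i j \<in> alg m" if "i\<le>k" "j<m" for i j
    using P Q that unfolding Hom_def by blast+
  have tr: "dA i j 0 0 + dA i j 1 1 = 0" if "i\<le>k" "j<m" for i j
  proof -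
    have "fst (\<Phi> i j) \<in> sl2" "fst (\<Psi> i j) \<in> sl2" using PA[OF that] unfolding alg_def by auto
    hence "fst (\<Phi> i j) 0 0 + fst (\<Phi> i j) 1 1 = 0" "fst (\<Psi> i j) 0 0 + fst (\<Psi> i j) 1 1 = 0"
      unfolding sl2_def by auto
    thus ?thesis unfolding dA_def by simp
  qed
  note K = key[OF assms eq tr]
  show "\<Phi> = \<Psi>"
  proof (intro ext)
    fix i j
    show "\<Phi> i j = \<Psi> i j"
    proof (cases "i \<le> k \<and> j < m")
      case False
      have "\<Phi> i j = (\<lambda>_ _. 0, \<lambda>_ _. 0)" "\<Psi> i j = (\<lambda>_ _. 0, \<lambda>_ _. 0)"
        using P Q False unfolding Hom_def by (auto simp: not_le not_less)
      thus ?thesis by simp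
    next
      case True
      have inP: "\<Phi> i j \<in> alg m" "\<Psi> i j \<in> alg m" using PA True by auto
      have F: "fst (\<Phi> i j) r s = fst (\<Psi> i j) r s" for r s
      proof (cases "r \<le> 1 \<and> s \<le> 1")
        case True2: True
        have "dA i j r s = 0" using K(1)[of i j] True True2
          by (cases r; cases s) (auto simp: le_Suc_eq)
        thus ?thesis by (simp add: dA_def)
      next
        case False thus ?thesis using inP unfolding alg_def sl2_def by (auto simp: mem_Times_iff not_le)
      qed
      have G: "snd (\<Phi> i j) r s = snd (\<Psi> i j) r s" for r s
      proof (cases "r < m \<and> s < m")
        case True2: True
        have "dB i j r s = 0" using K(2)[of i j r s] True True2 by auto
        thus ?thesis by (simp add: dB_def)
      next
        case False thus ?thesis using inP unfolding alg_def glm_def by (auto simp: mem_Times_iff not_less)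
      qed
      show ?thesis using F G by (simp add: prod_eq_iff fun_eq_iff)
    qed
  qed
qed

end
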